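(* Let $h=\prod_{i=1}^N h_i$ with $h_i\in\bar K[z]$ nonzero, let $h_i=q_i^2+\rho_i$ be part-square decompositions, and set $q=\prod_{i=1}^N q_i$ and $\rho=h-q^2$. Put $t_i=t_{q_i,\rho_i}$ and $t=t_{q,\rho}=v(\rho)-v(h)$, and assume $t_i\ge0$ for all $i$. Then $t\ge\min\{t_1,\dots,t_N\}$. Moreover: (a) if the minimum $\min\{t_1,\dots,t_N\}$ is attained by a unique index $i_0$, then $t=\min\{t_1,\dots,t_N\}$, and the decomposition $h=q^2+\rho$ is good if and only if the decomposition $h_{i_0}=q_{i_0}^2+\rho_{i_0}$ is good; (b) if $N=2$, every root $s_1\in\bar K$ of $h_1$ satisfies $v(s_1)>0$, every root $s_2\in\bar K$ of $h_2$ satisfies $v(s_2)<0$, both decompositions $h_i=q_i^2+\rho_i$ are good, and $\min\{t_1,t_2\}<2v(2)$, then $t=\min\{t_1,t_2\}$ and the decomposition $h=q^2+\rho$ is good.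
   Context: $K$ is a field of characteristic $0$, complete with respect to a discrete valuation $v$ (values in $\mathbb{Q}\cup\{+\infty\}$), with algebraically closed residue field $k$ of characteristic $2$; $v$ extends to a fixed algebraic closure $\bar K$. For nonzero $h(z)=\sum_iH_iz^i\in\bar K[z]$, $v(h)=\min_iv(H_i)$ (Gauss valuation). A part-square decomposition of $h$ is $h=q^2+\rho$ with $q,\rho\in\bar K[z]$, $\deg q\le\lceil\deg h/2\rceil$; $t_{q,\rho}=v(\rho)-v(h)$. A decomposition $h=q^2+\rho$ is good if either $t_{q,\rho}\ge2v(2)$, or $t_{q,\rho}<2v(2)$ and there is no part-square decomposition $h=\tilde q^2+\tilde\rho$ with $t_{\tilde q,\tilde\rho}>t_{q,\rho}$. *)

theory Defs
  imports "HOL-Computational_Algebra.Polynomial" "HOL-Library.Extended_Real"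
begin

definition is_valuation :: "('a::field \<Rightarrow> ereal) \<Rightarrow> bool" where
  "is_valuation v \<longleftrightarrow>
     (\<forall>x. v x = \<infinity> \<longleftrightarrow> x = 0) \<and>
     (\<forall>x. x \<noteq> 0 \<longrightarrow> (\<exists>r::rat. v x = ereal (of_rat r))) \<and>
     (\<forall>x y. v (x * y) = v x + v y) \<and>
     (\<forall>x y. min (v x) (v y) \<le> v (x + y))"

definition alg_closed_field :: "'a::field itself \<Rightarrow> bool" where
  "alg_closed_field _ \<longleftrightarrow> (\<forall>p::'a poly. 1 \<le> degree p \<longrightarrow> (\<exists>x. poly p x = 0))"

definition is_subfield :: "'a::field set \<Rightarrow> bool" where
  "is_subfield K \<longleftrightarrow> 0 \<in> K \<and> 1 \<in> K \<and>
     (\<forall>x\<in>K. \<forall>y\<in>K. x + y \<in> K \<and> x * y \<in> K \<and> - x \<in> K) \<and>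
     (\<forall>x\<in>K. x \<noteq> 0 \<longrightarrow> inverse x \<in> K)"

definition discrete_on :: "('a::field \<Rightarrow> ereal) \<Rightarrow> 'a set \<Rightarrow> bool" where
  "discrete_on v K \<longleftrightarrow> (\<exists>\<pi>\<in>K. \<pi> \<noteq> 0 \<and> 0 < v \<pi> \<and>
      (\<forall>x\<in>K. x \<noteq> 0 \<longrightarrow> (\<exists>k::int. v x = ereal (of_int k) * v \<pi>)))"

definition complete_on :: "('a::field \<Rightarrow> ereal) \<Rightarrow> 'a set \<Rightarrow> bool" where
  "complete_on v K \<longleftrightarrow> (\<forall>x::nat \<Rightarrow> 'a. (\<forall>n. x n \<in> K) \<longrightarrow>
      (\<forall>M::real. \<exists>N. \<forall>m\<ge>N. \<forall>n\<ge>N. ereal M \<le> v (x m - x n)) \<longrightarrow>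
      (\<exists>l\<in>K. \<forall>M::real. \<exists>N. \<forall>n\<ge>N. ereal M \<le> v (x n - l)))"

definition algebraic_over :: "'a::field set \<Rightarrow> bool" where
  "algebraic_over K \<longleftrightarrow> (\<forall>x::'a. \<exists>p. p \<noteq> 0 \<and> (\<forall>i. coeff p i \<in> K) \<and> poly p x = 0)"

text \<open>The residue field of (K, v) is algebraically closed: every monic polynomial
  with integral coefficients of positive degree has a root modulo the maximal ideal.\<close>
definition residue_alg_closed :: "('a::field \<Rightarrow> ereal) \<Rightarrow> 'a set \<Rightarrow> bool" where
  "residue_alg_closed v K \<longleftrightarrow> (\<forall>p. (\<forall>i. coeff p i \<in> K \<and> 0 \<le> v (coeff p i)) \<longrightarrow>
      lead_coeff p = 1 \<longrightarrow> 1 \<le> degree p \<longrightarrow>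
      (\<exists>x\<in>K. 0 \<le> v x \<and> 0 < v (poly p x)))"

text \<open>Gauss valuation of a polynomial (equals \<infinity> for the zero polynomial).\<close>
definition gauss_val :: "('a::field \<Rightarrow> ereal) \<Rightarrow> 'a poly \<Rightarrow> ereal" where
  "gauss_val v h = Min ((\<lambda>i. v (coeff h i)) ` {..degree h})"

definition part_square_dec :: "'a::field poly \<Rightarrow> 'a poly \<Rightarrow> 'a poly \<Rightarrow> bool" where
  "part_square_dec h q \<rho> \<longleftrightarrow> h = q ^ 2 + \<rho> \<and> degree q \<le> (degree h + 1) div 2"

definition dec_t :: "('a::field \<Rightarrow> ereal) \<Rightarrow> 'a poly \<Rightarrow> 'a poly \<Rightarrow> ereal" where
  "dec_t v q \<rho> = gauss_val v \<rho> - gauss_val v (q ^ 2 + \<rho>)"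

definition good_dec :: "('a::field \<Rightarrow> ereal) \<Rightarrow> 'a poly \<Rightarrow> 'a poly \<Rightarrow> 'a poly \<Rightarrow> bool" where
  "good_dec v h q \<rho> \<longleftrightarrow> h = q ^ 2 + \<rho> \<and>
     (2 * v 2 \<le> dec_t v q \<rho> \<or>
      (dec_t v q \<rho> < 2 * v 2 \<and>
       \<not> (\<exists>q' \<rho>'. part_square_dec h q' \<rho>' \<and> dec_t v q \<rho> < dec_t v q' \<rho>')))"

end

theory Submission
  imports Defs
begin


locale valu =
  fixes v :: "'a::field_char_0 \<Rightarrow> ereal"
  assumes val: "is_valuation v"
begin

lemma v_inf_iff: "v x = \<infinity> \<longleftrightarrow> x = 0" using val unfolding is_valuation_def by blast
lemma v_0[simp]: "v 0 = \<infinity>" using v_inf_iff by simp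
lemma v_mult: "v (x * y) = v x + v y" using val unfolding is_valuation_def by blast
lemma v_add: "min (v x) (v y) \<le> v (x + y)" using val unfolding is_valuation_def by blast
lemma v_fin: "x \<noteq> 0 \<Longrightarrow> \<exists>r::real. v x = ereal r"
  using val unfolding is_valuation_def by blast
lemma v_not_minf[simp]: "v x \<noteq> -\<infinity>"
  by (cases "x = 0") (auto dest: v_fin)
lemma v_gt_minf[simp]: "-\<infinity> < v x"
  using v_not_minf by (simp add: ereal_infty_less(2))
lemma v_1[simp]: "v 1 = 0"
proof -
  obtain r where r: "v 1 = ereal r" using v_fin[of 1] by auto
  have "v 1 = v 1 + v 1" using v_mult[of 1 1] by simp
  then show ?thesis using r by simp
qed
lemma v_m1[simp]: "v (-1) = 0"
proof -
  obtain r where r: "v (-1) = ereal r" using v_fin[of "-1"] by auto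
  have "v 1 = v (-1) + v (-1)" using v_mult[of "-1" "-1"] by simp
  then show ?thesis using r by simp
qed
lemma v_uminus[simp]: "v (- x) = v x"
  using v_mult[of "-1" x] by simp
lemma v_diff: "min (v x) (v y) \<le> v (x - y)"
  using v_add[of x "-y"] by simp
lemma v_add_strict: assumes "v x < v y" shows "v (x + y) = v x"
proof -
  have a: "min (v x) (v y) \<le> v (x + y)" by (rule v_add)
  have b: "min (v (x + y)) (v (-y)) \<le> v x" using v_add[of "x+y" "-y"] by simp
  show ?thesis using a b assms by (auto simp: min_def split: if_splits)
qed
lemma v_ge_add: "L \<le> v x \<Longrightarrow> L \<le> v y \<Longrightarrow> L \<le> v (x + y)"
  using v_add[of x y] by (metis min.bounded_iff order_trans)
lemma v_gt_add: "L < v x \<Longrightarrow> L < v y \<Longrightarrow> L < v (x + y)"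
  using v_add[of x y] by (metis min_less_iff_conj order_less_le_trans)
lemma v_ge_diff: "L \<le> v x \<Longrightarrow> L \<le> v y \<Longrightarrow> L \<le> v (x - y)"
  using v_ge_add[of L x "-y"] by simp
lemma v_gt_diff: "L < v x \<Longrightarrow> L < v y \<Longrightarrow> L < v (x - y)"
  using v_gt_add[of L x "-y"] by simp
lemma v_power2: "v (x^2) = 2 * v x"
  by (cases "v x") (auto simp: power2_eq_square v_mult)

lemma v_sum_ge: "finite A \<Longrightarrow> (\<And>i. i \<in> A \<Longrightarrow> L \<le> v (f i)) \<Longrightarrow> L \<le> v (sum f A)"
  by (induction A rule: finite_induct) (auto intro!: v_ge_add)
lemma v_sum_gt: "finite A \<Longrightarrow> L \<noteq> \<infinity> \<Longrightarrow> (\<And>i. i \<in> A \<Longrightarrow> L < v (f i)) \<Longrightarrow> L < v (sum f A)"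
proof (induction A rule: finite_induct)
  case empty then show ?case by (simp add: less_le)
next
  case (insert x F) then show ?case by (simp add: v_gt_add)
qed
lemma v_sum_dom:
  assumes "finite A" "ii \<in> A" "v (f ii) = L" "L \<noteq> \<infinity>" "\<And>i. i \<in> A \<Longrightarrow> i \<noteq> ii \<Longrightarrow> L < v (f i)"
  shows "v (sum f A) = L"
proof -
  have s: "sum f A = f ii + sum f (A - {ii})" using assms(1,2) by (simp add: sum.remove)
  have "L < v (sum f (A - {ii}))" using assms by (intro v_sum_gt) auto
  then show ?thesis unfolding s using v_add_strict assms(3) by simp
qed

lemma ereal_add_lt1: "a \<le> x \<Longrightarrow> b < y \<Longrightarrow> a \<noteq> \<infinity> \<Longrightarrow> a \<noteq> -\<infinity> \<Longrightarrow> x \<noteq> -\<infinity> \<Longrightarrow> a + b < x + (y::ereal)"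
  by (cases a; cases b; cases x; cases y) auto
lemma ereal_add_lt2: "a < x \<Longrightarrow> b \<le> y \<Longrightarrow> b \<noteq> \<infinity> \<Longrightarrow> b \<noteq> -\<infinity> \<Longrightarrow> y \<noteq> -\<infinity> \<Longrightarrow> a + b < x + (y::ereal)"
  by (cases a; cases b; cases x; cases y) auto
lemma ereal_add_le: "a \<le> x \<Longrightarrow> b \<le> y \<Longrightarrow> a + b \<le> x + (y::ereal)"
  by (rule add_mono)

abbreviation gv where "gv \<equiv> gauss_val v"

lemma gv_le_coeff: "gv f \<le> v (coeff f k)"
proof (cases "k \<le> degree f")
  case True then show ?thesis unfolding gauss_val_def by (intro Min_le) auto
next
  case False then show ?thesis by (simp add: coeff_eq_0)
qed
lemma gv_attained: "\<exists>k. gv f = v (coeff f k)"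
proof -
  have "gv f \<in> (\<lambda>i. v (coeff f i)) ` {..degree f}" unfolding gauss_val_def by (intro Min_in) auto
  then show ?thesis by auto
qed
lemma gv_ge_iff: "L \<le> gv f \<longleftrightarrow> (\<forall>k. L \<le> v (coeff f k))"
  using gv_le_coeff gv_attained by (metis order_trans)
lemma gv_gt_iff: "L < gv f \<longleftrightarrow> (\<forall>k. L < v (coeff f k))"
  using gv_le_coeff gv_attained by (metis order_less_le_trans)
lemma gv_0[simp]: "gv 0 = \<infinity>"
  using gv_attained[of 0] by auto
lemma gv_inf_iff: "gv f = \<infinity> \<longleftrightarrow> f = 0"
proof
  assume "gv f = \<infinity>"
  then have "\<forall>k. v (coeff f k) = \<infinity>" using gv_le_coeff[of f] by (metis PInfty_neq_ereal(1) ereal_infty_less_eq(1))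
  then show "f = 0" by (simp add: v_inf_iff poly_eq_iff)
qed simp
lemma gv_not_minf[simp]: "gv f \<noteq> -\<infinity>"
  using gv_attained[of f] v_not_minf by metis
lemma gv_fin: "f \<noteq> 0 \<Longrightarrow> \<exists>r. gv f = ereal r"
  using gv_inf_iff[of f] gv_not_minf[of f] by (cases "gv f") auto
lemma gv_ge_add: "L \<le> gv f \<Longrightarrow> L \<le> gv g \<Longrightarrow> L \<le> gv (f + g)"
  by (auto simp: gv_ge_iff intro!: v_ge_add)
lemma gv_ge_diff: "L \<le> gv f \<Longrightarrow> L \<le> gv g \<Longrightarrow> L \<le> gv (f - g)"
  by (auto simp: gv_ge_iff intro!: v_ge_diff)
lemma gv_gt_add: "L < gv f \<Longrightarrow> L < gv g \<Longrightarrow> L < gv (f + g)"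
  by (auto simp: gv_gt_iff intro!: v_gt_add)
lemma gv_gt_diff: "L < gv f \<Longrightarrow> L < gv g \<Longrightarrow> L < gv (f - g)"
  by (auto simp: gv_gt_iff intro!: v_gt_diff)
lemma gv_add_min: "min (gv f) (gv g) \<le> gv (f + g)"
  by (rule gv_ge_add) auto
lemma gv_uminus[simp]: "gv (- f) = gv f"
proof -
  have "\<And>L. L \<le> gv (- f) \<longleftrightarrow> L \<le> gv f" by (simp add: gv_ge_iff)
  then show ?thesis by (metis order.antisym order.refl)
qed
lemma gv_diff_sym: "gv (f - g) = gv (g - f)"
  by (metis gv_uminus minus_diff_eq)
lemma gv_add_strict: assumes "gv f < gv g" shows "gv (f + g) = gv f"
proof -
  obtain k where k: "gv f = v (coeff f k)" using gv_attained by blast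
  have "v (coeff g k) > v (coeff f k)" using assms k gv_le_coeff[of g k] by simp
  then have "v (coeff (f+g) k) = gv f" using k v_add_strict by simp
  moreover have "gv f \<le> gv (f + g)" using assms by (intro gv_ge_add) auto
  ultimately show ?thesis using gv_le_coeff[of "f+g" k] by simp
qed
lemma gv_smult: "gv (smult c f) = v c + gv f"
proof -
  obtain k where k: "gv f = v (coeff f k)" using gv_attained by blast
  have "v c + gv f \<le> gv (smult c f)" unfolding gv_ge_iff
    by (auto simp: v_mult intro!: add_left_mono gv_le_coeff)
  moreover have "gv (smult c f) \<le> v c + gv f" using gv_le_coeff[of "smult c f" k] k by (simp add: v_mult)
  ultimately show ?thesis by simp
qed
lemma gv_pCons0[simp]: "gv (pCons 0 p) = gv p"
proof -
  have "\<And>L. L \<le> gv (pCons 0 p) \<longleftrightarrow> L \<le> gv p"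
    by (auto simp: gv_ge_iff coeff_pCons split: nat.splits)
  then show ?thesis by (metis order.antisym order.refl)
qed
lemma gv_pCons_le: "gv (pCons a p) \<le> v a" "gv (pCons a p) \<le> gv p"
  using gv_le_coeff[of "pCons a p" 0] apply simp
  unfolding gv_ge_iff using gv_le_coeff[of "pCons a p" "Suc k" for k] by simp_all

lemma gv_mult_ge: "gv f + gv g \<le> gv (f * g)"
  unfolding gv_ge_iff coeff_mult
  by (auto intro!: v_sum_ge simp: v_mult intro!: add_mono gv_le_coeff)

lemma gv_mult: "gv (f * g) = gv f + gv g"
proof (cases "f = 0 \<or> g = 0")
  case True
  have "\<infinity> + gv g = \<infinity>" "gv f + \<infinity> = \<infinity>" using gv_not_minf[of f] gv_not_minf[of g] by simp_all
  then show ?thesis using True by (elim disjE) simp_all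
next
  case False
  then have fz: "f \<noteq> 0" and gz: "g \<noteq> 0" by auto
  define P where "P = (\<lambda>i. gv f = v (coeff f i))"
  define Q where "Q = (\<lambda>i. gv g = v (coeff g i))"
  define a where "a = Least P"
  define b where "b = Least Q"
  have "\<exists>i. P i" unfolding P_def using gv_attained by blast
  then have a: "gv f = v (coeff f a)" unfolding a_def using LeastI_ex P_def by metis
  have "\<exists>i. Q i" unfolding Q_def using gv_attained by blast
  then have b: "gv g = v (coeff g b)" unfolding b_def using LeastI_ex Q_def by metis
  have a2: "gv f < v (coeff f i)" if "i < a" for i
  proof -
    have "\<not> P i" using not_less_Least[of i P] that a_def by blast
    then have "gv f \<noteq> v (coeff f i)" using P_def by blast
    then show ?thesis using gv_le_coeff[of f i] order_le_neq_trans by blast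
  qed
  have b2: "gv g < v (coeff g i)" if "i < b" for i
  proof -
    have "\<not> Q i" using not_less_Least[of i Q] that b_def by blast
    then have "gv g \<noteq> v (coeff g i)" using Q_def by blast
    then show ?thesis using gv_le_coeff[of g i] order_le_neq_trans by blast
  qed
  obtain rf where rf: "gv f = ereal rf" using gv_fin fz by blast
  obtain rg where rg: "gv g = ereal rg" using gv_fin gz by blast
  have "v (coeff (f * g) (a + b)) = gv f + gv g"
    unfolding coeff_mult
  proof (rule v_sum_dom[where ii = a])
    show "v (coeff f a * coeff g (a + b - a)) = gv f + gv g" using a b by (simp add: v_mult)
    show "gv f + gv g \<noteq> \<infinity>" using rf rg by simp
    show "finite {..a+b}" by simp
    show "a \<in> {..a+b}" by simp
    fix i assume i: "i \<in> {..a+b}" "i \<noteq> a"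
    show "gv f + gv g < v (coeff f i * coeff g (a + b - i))"
    proof (cases "i < a")
      case True
      have "gv f + gv g < v (coeff f i) + v (coeff g (a + b - i))"
        by (rule ereal_add_lt2[OF a2[OF True] gv_le_coeff]) (simp_all add: rg)
      then show ?thesis by (simp add: v_mult)
    next
      case False
      then have "a + b - i < b" using i by auto
      have "gv f + gv g < v (coeff f i) + v (coeff g (a + b - i))"
        by (rule ereal_add_lt1[OF gv_le_coeff b2[OF \<open>a + b - i < b\<close>]]) (simp_all add: rf)
      then show ?thesis by (simp add: v_mult)
    qed
  qed
  then have "gv (f * g) \<le> gv f + gv g" using gv_le_coeff[of "f*g" "a+b"] by simp
  then show ?thesis using gv_mult_ge[of f g] by (rule order.antisym)
qed

lemma gv_power2: "gv (f^2) = 2 * gv f"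
  by (cases "gv f") (auto simp: power2_eq_square gv_mult)
lemma gv_prod: "finite A \<Longrightarrow> gv (prod f A) = (\<Sum>i\<in>A. gv (f i))"
proof (induction A rule: finite_induct)
  case empty
  have "gv 1 = 0" using gv_smult[of 1 1] gv_mult[of 1 1] gv_fin[of 1] by auto
  then show ?case by simp
qed (simp add: gv_mult)

definition err :: "'a poly \<Rightarrow> nat \<Rightarrow> 'a" where
  "err e m = coeff (e^2) m - (if even m then (coeff e (m div 2))^2 else 0)"

lemma sq_pCons: "(pCons a p)^2 = smult a (pCons a p) + pCons 0 (smult a p) + pCons 0 (pCons 0 (p*p))"
  by (simp add: power2_eq_square mult_pCons_left mult_pCons_right add.assoc)

lemma coeff_mult_2: "coeff (2 * p) k = 2 * coeff p k"
  by (simp add: mult_2)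

lemma coeff_mult_2': "coeff (p * 2) k = 2 * coeff p k"
  by (simp add: mult_2_right mult_2)

lemma two_mul_le: "(G::ereal) \<le> x \<Longrightarrow> G \<le> y \<Longrightarrow> c + 2 * G \<le> c + (x + y)"
proof -
  assume "G \<le> x" "G \<le> y"
  then have "G + G \<le> x + y" by (rule add_mono)
  moreover have "2 * G = G + G" by (cases G) auto
  ultimately show ?thesis by (simp add: add_left_mono)
qed

lemma err_bound: "v 2 + 2 * gv e \<le> v (err e m)"
proof (induction e arbitrary: m rule: pCons_induct)
  case 0
  then show ?case by (simp add: err_def)
next
  case (pCons a p)
  let ?e = "pCons a p"
  have ga: "gv ?e \<le> v a" and gp: "gv ?e \<le> gv p" by (rule gv_pCons_le)+
  have gk: "gv ?e \<le> v (coeff p k)" for k using gp gv_le_coeff[of p k] by simp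
  have t2: "v 2 + 2 * gv ?e \<le> v (2 * a * coeff p k)" for k
    unfolding v_mult add.assoc by (intro add_left_mono two_mul_le ga gk)
  show ?case
  proof (cases m)
    case 0
    then show ?thesis by (simp add: err_def sq_pCons power2_eq_square)
  next
    case (Suc k)
    show ?thesis
    proof (cases k)
      case 0
      have "err ?e m = 2 * a * coeff p 0" using Suc 0 by (simp add: err_def sq_pCons coeff_mult_2)
      then show ?thesis using t2 by simp
    next
      case (Suc j)
      have ev: "even m = even j" using \<open>m = Suc k\<close> Suc by simp
      have dv: "m div 2 = Suc (j div 2)" using \<open>m = Suc k\<close> Suc by simp
      have "err ?e m = 2 * a * coeff p (Suc j) + err p j"
        using \<open>m = Suc k\<close> Suc ev dv by (simp add: err_def sq_pCons power2_eq_square algebra_simps coeff_mult_2')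
      moreover have "v 2 + 2 * gv ?e \<le> v (err p j)"
      proof -
        have "v 2 + 2 * gv ?e \<le> v 2 + 2 * gv p"
          using gp by (intro add_left_mono) (cases "gv ?e"; cases "gv p"; simp)
        then show ?thesis using pCons.IH[of j] by simp
      qed
      ultimately show ?thesis using t2 by (simp add: v_ge_add)
    qed
  qed
qed

end



lemma H1: "2*B < c \<Longrightarrow> c \<le> h + 2*w \<Longrightarrow> h \<le> 2*Q \<Longrightarrow> w = ereal r2 \<Longrightarrow> h = ereal rh \<Longrightarrow> B = ereal \<beta> \<Longrightarrow> Q \<noteq> \<infinity> \<Longrightarrow> Q \<noteq> -\<infinity> \<Longrightarrow> 2*ereal \<beta> < w + Q + (B::ereal)"
  by (cases Q; cases c) simp_all
lemma H2: "c \<le> 2*B \<Longrightarrow> c \<le> h + 2*w \<Longrightarrow> h \<le> 2*Q \<Longrightarrow> w = ereal r2 \<Longrightarrow> h = ereal rh \<Longrightarrow> Q \<noteq> \<infinity> \<Longrightarrow> Q \<noteq> -\<infinity> \<Longrightarrow> B \<noteq> -\<infinity> \<Longrightarrow> c \<le> w + Q + (B::ereal)"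
  by (cases Q; cases c; cases B) simp_all

locale valu2 = valu v for v :: "'a::field_char_0 \<Rightarrow> ereal" +
  assumes closed: "alg_closed_field TYPE('a)"
    and v2pos: "0 < v 2"
begin

lemma v2_fin: "\<exists>r. v 2 = ereal r"
  using v_fin[of 2] by simp

lemma sqrt_ex: "\<exists>y::'a. y^2 = x"
proof -
  have "degree [:-x, 0, 1:] = 2" by simp
  then have "\<exists>y. poly [:-x, 0, 1:] y = 0" using closed unfolding alg_closed_field_def
    by (metis one_le_numeral)
  then obtain y where "poly [:-x, 0, 1:] y = 0" by blast
  then have "y^2 = x" by (simp add: power2_eq_square algebra_simps)
  then show ?thesis by blast
qed

lemma lt_plus_v2: "a \<le> b \<Longrightarrow> a \<noteq> \<infinity> \<Longrightarrow> a \<noteq> -\<infinity> \<Longrightarrow> a < v 2 + b"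
  using v2pos v2_fin by (cases a; cases b) auto

lemma even_approx:
  assumes fz: "f \<noteq> 0" and odd_sm: "\<forall>k. odd k \<longrightarrow> gv f < v (coeff f k)"
  shows "\<exists>e. gv f < gv (f - e^2) \<and> gv f \<le> 2 * gv e"
proof -
  define sr where "sr = (\<lambda>x::'a. SOME y. y^2 = x)"
  have sr: "(sr x)^2 = x" for x unfolding sr_def using sqrt_ex by (metis (mono_tags) someI_ex)
  have sr0: "sr 0 = 0" using sr[of 0] by simp
  define e where "e = Poly (map (\<lambda>j. sr (coeff f (2*j))) [0..<Suc (degree f)])"
  have ce: "coeff e j = sr (coeff f (2*j))" for j
  proof (cases "j < Suc (degree f)")
    case True then show ?thesis unfolding e_def by (simp add: nth_default_def del: upt_Suc)
  next
    case False
    then have "coeff f (2*j) = 0" by (intro coeff_eq_0) auto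
    then show ?thesis using False unfolding e_def by (simp add: nth_default_def sr0 del: upt_Suc)
  qed
  have ve: "2 * v (coeff e j) = v (coeff f (2*j))" for j
    using v_power2[of "coeff e j"] sr ce by simp
  obtain rf where rf: "gv f = ereal rf" using gv_fin[OF fz] by blast
  have ge: "gv f \<le> 2 * gv e"
  proof -
    obtain j where j: "gv e = v (coeff e j)" using gv_attained by blast
    show ?thesis unfolding j ve by (rule gv_le_coeff)
  qed
  have "gv f < v 2 + 2 * gv e" using lt_plus_v2[OF ge] rf by simp
  then have errb: "gv f < v (err e k)" for k using err_bound[of e k] by (meson order_less_le_trans)
  have "gv f < gv (f - e^2)"
    unfolding gv_gt_iff
  proof
    fix k
    have c: "coeff (e^2) k = err e k + (if even k then (coeff e (k div 2))^2 else 0)"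
      unfolding err_def by simp
    show "gv f < v (coeff (f - e^2) k)"
    proof (cases "even k")
      case True
      then have "coeff (f - e^2) k = - err e k" using c sr ce by auto
      then show ?thesis using errb by simp
    next
      case False
      then have "coeff (f - e^2) k = coeff f k - err e k" using c by auto
      then show ?thesis using errb odd_sm False by (simp add: v_gt_diff)
    qed
  qed
  then show ?thesis using ge by blast
qed

lemma sq_oddsmall:
  assumes "L < gv r" "L \<le> 2 * gv e" "L \<noteq> \<infinity>" "odd k" "L \<noteq> -\<infinity>"
  shows "L < v (coeff (e^2 + r) k)"
proof -
  have "coeff (e^2) k = err e k" using assms(4) unfolding err_def by simp
  moreover have "L < v 2 + 2 * gv e" using lt_plus_v2[OF assms(2,3,5)] .
  then have "L < v (err e k)" using err_bound[of e k] by (meson order_less_le_trans)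
  ultimately show ?thesis using assms(1) gv_le_coeff[of r k] by (simp add: v_gt_add)
qed

lemma smult2: "smult 2 (p::'a poly) = p + p"
  by (rule poly_eqI) (simp only: coeff_smult coeff_add mult_2)

lemma truncation:
  assumes hz: "h \<noteq> 0" and hq: "h = q^2 + \<rho>" and gq: "gv h \<le> 2 * gv q"
    and c1: "c \<le> gv \<rho>" and c2: "c \<le> gv h + 2 * v 2"
  shows "\<exists>a. degree a \<le> degree h div 2 \<and> c \<le> gv (h - a^2)"
proof (cases "q = 0")
  case True
  then show ?thesis using hq c1 by (intro exI[of _ 0]) simp
next
  case False
  define m where "m = degree h div 2"
  define a where "a = poly_cutoff (Suc m) q"
  define b where "b = q - a"
  have ca: "coeff a k = (if k \<le> m then coeff q k else 0)" for k
    unfolding a_def coeff_poly_cutoff by simp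
  have cb: "coeff b k = (if k \<le> m then 0 else coeff q k)" for k
    unfolding b_def using ca by simp
  have dega: "degree a \<le> m" by (rule degree_le) (simp add: ca)
  have gaq: "gv q \<le> gv a" unfolding gv_ge_iff using gv_le_coeff[of q] by (simp add: ca)
  have gbq: "gv q \<le> gv b" unfolding gv_ge_iff using gv_le_coeff[of q] by (simp add: cb)
  obtain rh where rh: "gv h = ereal rh" using gv_fin[OF hz] by blast
  obtain r2 where r2: "v 2 = ereal r2" "0 < r2" using v2_fin v2pos by auto
  have qsq: "q^2 = a^2 + smult 2 (a * b) + b^2"
    unfolding b_def smult2 by (simp add: power2_eq_square algebra_simps)
  have gqfin: "gv q \<noteq> \<infinity>" using False gv_inf_iff by blast
  have cb2: "c \<le> 2 * gv b"
  proof (rule ccontr)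
    assume "\<not> c \<le> 2 * gv b"
    then have lt: "2 * gv b < c" by simp
    obtain j where j: "gv b = v (coeff b j)" using gv_attained by blast
    have bj: "coeff b j \<noteq> 0"
    proof
      assume "coeff b j = 0" then have "gv b = \<infinity>" using j by simp
      then show False using lt by simp
    qed
    then have jm: "m < j" using cb by (auto split: if_splits)
    have dh: "degree h < 2 * j" using jm unfolding m_def by linarith
    obtain \<beta> where beta: "gv b = ereal \<beta>" using bj gv_fin[of b] by (metis coeff_0)
    have h0: "coeff h (2*j) = 0" using dh by (rule coeff_eq_0)
    have "coeff h (2*j) = coeff (q^2) (2*j) + coeff \<rho> (2*j)" using hq by simp
    then have "coeff (q^2) (2*j) = - coeff \<rho> (2*j)" using h0 by (simp add: eq_neg_iff_add_eq_0)
    then have v1: "c \<le> v (coeff (q^2) (2*j))" using c1 gv_le_coeff[of \<rho> "2*j"] by simp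
    have dega2: "degree (a^2) < 2*j"
      using degree_power_le[of a 2] dega jm by linarith
    have cq: "coeff (q^2) (2*j) = (coeff b j)^2 + (err b (2*j) + coeff (smult 2 (a * b)) (2*j))"
    proof -
      have "coeff (a^2) (2*j) = 0" using dega2 by (rule coeff_eq_0)
      moreover have "coeff (b^2) (2*j) = err b (2*j) + (coeff b j)^2" unfolding err_def by simp
      ultimately show ?thesis unfolding qsq coeff_add by (simp only: add_0 ac_simps)
    qed
    have vbj: "v ((coeff b j)^2) = 2 * ereal \<beta>" using j beta v_power2 by simp
    have e1: "2 * ereal \<beta> < v (err b (2*j))"
    proof -
      have "2 * ereal \<beta> < v 2 + 2 * gv b" using r2 beta by simp
      then show ?thesis using err_bound[of b "2*j"] by simp
    qed
    have e2: "2 * ereal \<beta> < v (coeff (smult 2 (a * b)) (2*j))"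
    proof -
      have g: "gv (smult 2 (a*b)) = v 2 + gv a + gv b" by (simp add: gv_smult gv_mult add.assoc)
      have "2 * ereal \<beta> < v 2 + gv q + gv b"
        using H1[OF lt c2 gq r2(1) rh beta gqfin gv_not_minf[of q]] .
      also have "\<dots> \<le> v 2 + gv a + gv b" using gaq by (simp add: add_mono)
      finally show ?thesis using g gv_le_coeff[of "smult 2 (a*b)" "2*j"] by simp
    qed
    have "v (coeff (q^2) (2*j)) = 2 * ereal \<beta>"
      unfolding cq by (subst v_add_strict) (use vbj e1 e2 v_gt_add in auto)
    then show False using v1 lt beta by simp
  qed
  have hd: "h - a^2 = \<rho> + smult 2 (a * b) + b^2" using hq qsq by simp
  have "c \<le> gv (smult 2 (a * b))"
  proof -
    have g: "gv (smult 2 (a*b)) = v 2 + gv a + gv b" by (simp add: gv_smult gv_mult add.assoc)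
    have "c \<le> v 2 + gv q + gv b"
      using H2[OF cb2 c2 gq r2(1) rh gqfin gv_not_minf[of q] gv_not_minf[of b]] .
    also have "\<dots> \<le> v 2 + gv a + gv b" using gaq by (simp add: add_mono)
    finally show ?thesis using g by simp
  qed
  moreover have "c \<le> gv (b^2)" using cb2 by (simp add: gv_power2)
  ultimately have "c \<le> gv (h - a^2)" unfolding hd using c1 by (intro gv_ge_add) auto
  then show ?thesis using dega m_def by blast
qed

lemma H3: "h \<le> 2*Q \<Longrightarrow> d2 < h + 2*w \<Longrightarrow> w = ereal r2 \<Longrightarrow> h = ereal rh \<Longrightarrow> Q \<noteq> -\<infinity> \<Longrightarrow> D \<noteq> -\<infinity>
   \<Longrightarrow> P = ereal rp \<Longrightarrow> P < h + 2*w \<Longrightarrow> P \<le> 2*D \<Longrightarrow> P < w + Q + (D::ereal)"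
  by (cases Q; cases D) simp_all

lemma good_crit:
  assumes hz: "h \<noteq> 0" and hq: "h = q^2 + \<rho>" and rz: "\<rho> \<noteq> 0"
    and t0: "gv h \<le> gv \<rho>" and t2: "gv \<rho> < gv h + 2 * v 2"
  shows "(\<exists>q' \<rho>'. part_square_dec h q' \<rho>' \<and> dec_t v q \<rho> < dec_t v q' \<rho>') \<longleftrightarrow>
         (\<forall>k. odd k \<longrightarrow> gv \<rho> < v (coeff \<rho> k))"
proof -
  obtain rh where rh: "gv h = ereal rh" using gv_fin[OF hz] by blast
  obtain rr where rr: "gv \<rho> = ereal rr" using gv_fin[OF rz] by blast
  obtain r2 where r2: "v 2 = ereal r2" "0 < r2" using v2_fin v2pos by auto
  have dt: "dec_t v q' \<rho>' = gv \<rho>' - gv h" if "h = q'^2 + \<rho>'" for q' \<rho>'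
    unfolding dec_t_def using that by simp
  have cmp: "dec_t v q \<rho> < dec_t v q' \<rho>' \<longleftrightarrow> gv \<rho> < gv \<rho>'" if "h = q'^2 + \<rho>'" for q' \<rho>'
    unfolding dt[OF that] dt[OF hq] rh rr by (cases "gv \<rho>'") auto
  have gq: "gv h \<le> 2 * gv q"
  proof -
    have "gv h \<le> gv (h - \<rho>)" using t0 by (intro gv_ge_diff) auto
    then show ?thesis using hq by (simp add: gv_power2)
  qed
  show ?thesis
  proof
    assume "\<exists>q' \<rho>'. part_square_dec h q' \<rho>' \<and> dec_t v q \<rho> < dec_t v q' \<rho>'"
    then obtain q' \<rho>' where ps: "part_square_dec h q' \<rho>'" and lt: "dec_t v q \<rho> < dec_t v q' \<rho>'" by blast
    have hq': "h = q'^2 + \<rho>'" using ps unfolding part_square_dec_def by blast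
    have lt': "gv \<rho> < gv \<rho>'" using cmp[OF hq'] lt by blast
    define d where "d = q' - q"
    have rid: "\<rho> = \<rho>' + (smult 2 (q * d) + d^2)"
    proof -
      have "\<rho> = h - q^2" using hq by simp
      also have "\<dots> = q'^2 + \<rho>' - q^2" using hq' by simp
      also have "\<dots> = \<rho>' + (smult 2 (q * d) + d^2)" unfolding d_def smult2
        by (simp add: power2_eq_square algebra_simps)
      finally show ?thesis .
    qed
    have gX: "gv (smult 2 (q * d) + d^2) = gv \<rho>"
    proof -
      have "smult 2 (q * d) + d^2 = \<rho> + (- \<rho>')" using rid by simp
      moreover have "gv (\<rho> + (- \<rho>')) = gv \<rho>" using lt' by (intro gv_add_strict) simp
      ultimately show ?thesis by simp
    qed
    have gS: "gv (smult 2 (q * d)) = v 2 + gv q + gv d" by (simp add: gv_smult gv_mult add.assoc)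
    have d2: "gv \<rho> \<le> 2 * gv d"
    proof (rule ccontr)
      assume "\<not> gv \<rho> \<le> 2 * gv d"
      then have l: "2 * gv d < gv \<rho>" by simp
      then obtain \<delta> where dl: "gv d = ereal \<delta>" using rr gv_not_minf[of d] by (cases "gv d") auto
      show False
      proof (cases "2 * gv d < v 2 + gv q + gv d")
        case True
        then have "gv (d^2 + smult 2 (q * d)) = 2 * gv d"
          using gS by (subst gv_add_strict) (simp_all add: gv_power2)
        then show False using gX l by (simp add: add.commute)
      next
        case False
        then have "v 2 + gv q + gv d \<le> 2 * gv d" by simp
        then have "gv h + 2 * v 2 \<le> 2 * gv d"
          using gq dl r2 rh gv_not_minf[of q] by (cases "gv q") auto
        then show False using l t2 by simp
      qed
    qed
    have gSl: "gv \<rho> < gv (smult 2 (q * d))"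
      unfolding gS using H3[OF gq t2 r2(1) rh gv_not_minf[of q] gv_not_minf[of d] rr t2 d2] .
    show "\<forall>k. odd k \<longrightarrow> gv \<rho> < v (coeff \<rho> k)"
    proof (intro allI impI)
      fix k :: nat assume ok: "odd k"
      have ce: "coeff (d^2) k = err d k" using ok unfolding err_def by simp
      have "gv \<rho> < v 2 + 2 * gv d" using lt_plus_v2[OF d2] rr by simp
      then have a1: "gv \<rho> < v (coeff (d^2) k)" unfolding ce using err_bound[of d k] by simp
      have a2: "gv \<rho> < v (coeff \<rho>' k)" using lt' gv_le_coeff[of \<rho>' k] by simp
      have a3: "gv \<rho> < v (coeff (smult 2 (q * d)) k)" using gSl gv_le_coeff[of "smult 2 (q * d)" k] by simp
      have "coeff \<rho> k = coeff \<rho>' k + (coeff (smult 2 (q * d)) k + coeff (d^2) k)"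
        using rid by (metis coeff_add)
      then show "gv \<rho> < v (coeff \<rho> k)" using a1 a2 a3 by (simp add: v_gt_add)
    qed
  next
    assume osm: "\<forall>k. odd k \<longrightarrow> gv \<rho> < v (coeff \<rho> k)"
    obtain e where e1: "gv \<rho> < gv (\<rho> - e^2)" and e2: "gv \<rho> \<le> 2 * gv e"
      using even_approx[OF rz osm] by blast
    define q1 where "q1 = q + e"
    define \<rho>1 where "\<rho>1 = (\<rho> - e^2) - smult 2 (q * e)"
    have h1: "h = q1^2 + \<rho>1" unfolding q1_def \<rho>1_def hq smult2
      by (simp add: power2_eq_square algebra_simps)
    have gSe: "gv (smult 2 (q * e)) = v 2 + gv q + gv e" by (simp add: gv_smult gv_mult add.assoc)
    have "gv \<rho> < gv (smult 2 (q * e))"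
      unfolding gSe using H3[OF gq t2 r2(1) rh gv_not_minf[of q] gv_not_minf[of e] rr t2 e2] .
    then have g1: "gv \<rho> < gv \<rho>1" unfolding \<rho>1_def by (rule gv_gt_diff[OF e1])
    have gq1: "gv h \<le> 2 * gv q1"
    proof -
      have "gv h \<le> 2 * gv e" using t0 e2 by simp
      then have "gv h \<le> 2 * min (gv q) (gv e)" using gq by (simp add: min_def)
      also have "\<dots> \<le> 2 * gv q1" unfolding q1_def using gv_add_min[of q e]
        by (intro ereal_mult_left_mono) auto
      finally show ?thesis .
    qed
    define c where "c = min (gv \<rho>1) (gv h + 2 * v 2)"
    obtain a where da: "degree a \<le> degree h div 2" and ca: "c \<le> gv (h - a^2)"
      using truncation[OF hz h1 gq1, of c] unfolding c_def by auto
    have "gv \<rho> < c" unfolding c_def using g1 t2 by simp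
    then have lt: "gv \<rho> < gv (h - a^2)" using ca by simp
    have ps: "part_square_dec h a (h - a^2)" unfolding part_square_dec_def using da by auto
    have "dec_t v q \<rho> < dec_t v a (h - a^2)" using cmp[of a "h - a^2"] lt by simp
    then show "\<exists>q' \<rho>'. part_square_dec h q' \<rho>' \<and> dec_t v q \<rho> < dec_t v q' \<rho>'" using ps by blast
  qed
qed

end



context valu2
begin

lemma gv_1[simp]: "gv 1 = 0"
proof -
  have "gv 1 \<le> 0" using gv_le_coeff[of 1 0] by simp
  moreover have "0 \<le> gv 1" unfolding gv_ge_iff by (simp add: coeff_1)
  ultimately show ?thesis by simp
qed

lemma part0:
  assumes "finite J" "\<forall>j\<in>J. hs j \<noteq> 0 \<and> hs j = qs j^2 + \<rho>s j \<and> gv (hs j) + c \<le> gv (\<rho>s j)" "0 \<le> c"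
  shows "gv (\<Prod>j\<in>J. hs j) + c \<le> gv ((\<Prod>j\<in>J. hs j) - (\<Prod>j\<in>J. qs j)^2) \<and>
         gv (\<Prod>j\<in>J. hs j) \<le> gv ((\<Prod>j\<in>J. qs j)^2)"
  using assms(1,2)
proof (induction J rule: finite_induct)
  case empty
  then show ?case by simp
next
  case (insert a F)
  let ?P = "\<Prod>j\<in>F. hs j" and ?Q = "\<Prod>j\<in>F. qs j"
  have prem: "\<forall>j\<in>F. hs j \<noteq> 0 \<and> hs j = qs j^2 + \<rho>s j \<and> gv (hs j) + c \<le> gv (\<rho>s j)"
    using insert.prems by blast
  have IH: "gv ?P + c \<le> gv (?P - ?Q^2) \<and> gv ?P \<le> gv (?Q^2)" by (rule insert.IH[OF prem])
  then have IH1: "gv ?P + c \<le> gv (?P - ?Q^2)" and IH2: "gv ?P \<le> gv (?Q^2)" by blast+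
  have ha: "hs a = qs a^2 + \<rho>s a" and hr: "gv (hs a) + c \<le> gv (\<rho>s a)" using insert by auto
  have hp: "(\<Prod>j\<in>insert a F. hs j) = hs a * ?P" and hq: "(\<Prod>j\<in>insert a F. qs j) = qs a * ?Q"
    using insert by simp_all
  have gr: "gv (hs a) \<le> gv (\<rho>s a)" using order_trans[OF add_increasing2[OF assms(3) order.refl] hr] .
  have gqa: "gv (hs a) \<le> gv (qs a^2)"
  proof -
    have "gv (hs a) \<le> gv (hs a - \<rho>s a)" using gr by (intro gv_ge_diff) auto
    then show ?thesis using ha by simp
  qed
  have id: "hs a * ?P - (qs a * ?Q)^2 = hs a * (?P - ?Q^2) + \<rho>s a * ?Q^2"
    using ha by (simp add: power_mult_distrib algebra_simps)
  have "gv (hs a * ?P) + c \<le> gv (hs a * (?P - ?Q^2))"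
    using IH1 by (simp add: gv_mult add.assoc add_left_mono)
  moreover have "gv (hs a * ?P) + c \<le> gv (\<rho>s a * ?Q^2)"
  proof -
    have "gv (hs a * ?P) + c = (gv (hs a) + c) + gv ?P" by (simp add: gv_mult ac_simps)
    also have "\<dots> \<le> gv (\<rho>s a) + gv (?Q^2)" using hr IH2 by (rule add_mono)
    finally show ?thesis by (simp add: gv_mult)
  qed
  ultimately have "gv (hs a * ?P) + c \<le> gv (hs a * ?P - (qs a * ?Q)^2)"
    unfolding id by (intro gv_ge_add)
  moreover have "gv (hs a * ?P) \<le> gv ((qs a * ?Q)^2)"
    using gqa IH2 by (simp add: gv_mult power_mult_distrib add_mono)
  ultimately show ?case unfolding hp hq by simp
qed

lemma root_pos:
  assumes "p \<noteq> 0" "\<forall>s. poly p s = 0 \<longrightarrow> 0 < v s"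
  shows "\<forall>k < degree p. v (lead_coeff p) < v (coeff p k)"
  using assms
proof (induction "degree p" arbitrary: p)
  case 0
  then show ?case by simp
next
  case (Suc n)
  have "\<exists>s. poly p s = 0" using closed Suc.hyps(2) unfolding alg_closed_field_def by (metis le_add1 plus_1_eq_Suc)
  then obtain s where s: "poly p s = 0" by blast
  have vs: "0 < v s" using Suc.prems s by blast
  have "[:-s, 1:] dvd p" using s by (simp add: dvd_iff_poly_eq_0)
  then obtain p' where pp: "p = [:-s, 1:] * p'" by (elim dvdE)
  have p'z: "p' \<noteq> 0" using pp Suc.prems by auto
  have "degree ([:-s, 1:] * p') = degree [:-s, 1:] + degree p'" by (rule degree_mult_eq) (use p'z in simp_all)
  then have dp: "degree p = Suc (degree p')" using pp by simp
  have r': "\<forall>s. poly p' s = 0 \<longrightarrow> 0 < v s" using Suc.prems pp by auto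
  have IH: "\<forall>k < degree p'. v (lead_coeff p') < v (coeff p' k)"
    using Suc.hyps(1)[of p'] Suc.hyps(2) dp p'z r' by simp
  have "lead_coeff ([:-s, 1:] * p') = lead_coeff [:-s, 1:] * lead_coeff p'" by (rule lead_coeff_mult)
  then have lc: "lead_coeff p = lead_coeff p'" using pp by simp
  obtain L where L: "v (lead_coeff p') = ereal L" using v_fin[of "lead_coeff p'"] p'z by auto
  have cp: "coeff p k = - s * coeff p' k + (case k of 0 \<Rightarrow> 0 | Suc j \<Rightarrow> coeff p' j)" for k
    unfolding pp by (simp add: mult_pCons_left coeff_pCons split: nat.splits)
  have ge: "v (lead_coeff p') \<le> v (coeff p' k)" if "k \<le> degree p'" for k
    using IH that by (cases "k = degree p'") (auto simp: less_imp_le)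
  show ?case
  proof (intro allI impI)
    fix k assume k: "k < degree p"
    have a1: "v (lead_coeff p') < v (- s * coeff p' k)"
      unfolding v_mult v_uminus L using ge[of k] k dp vs L
      by (cases "v s"; cases "v (coeff p' k)") auto
    have a2: "v (lead_coeff p') < v (case k of 0 \<Rightarrow> 0 | Suc j \<Rightarrow> coeff p' j)"
      using IH k dp L by (cases k) auto
    show "v (lead_coeff p) < v (coeff p k)" unfolding lc cp[of k] using a1 a2 by (rule v_gt_add)
  qed
qed

lemma root_neg:
  assumes "p \<noteq> 0" "\<forall>s. poly p s = 0 \<longrightarrow> v s < 0"
  shows "\<forall>k > 0. v (coeff p 0) < v (coeff p k)"
  using assms
proof (induction "degree p" arbitrary: p)
  case 0
  then have "coeff p 0 \<noteq> 0" by (metis leading_coeff_0_iff)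
  then obtain r where "v (coeff p 0) = ereal r" using v_fin by blast
  then show ?case using 0 by (auto simp: coeff_eq_0)
next
  case (Suc n)
  have "\<exists>s. poly p s = 0" using closed Suc.hyps(2) unfolding alg_closed_field_def by (metis le_add1 plus_1_eq_Suc)
  then obtain s where s: "poly p s = 0" by blast
  have vs: "v s < 0" using Suc.prems s by blast
  obtain rs where rs: "v s = ereal rs" using vs v_fin[of s] by (cases "s = 0") auto
  have "[:-s, 1:] dvd p" using s by (simp add: dvd_iff_poly_eq_0)
  then obtain p' where pp: "p = [:-s, 1:] * p'" by (elim dvdE)
  have p'z: "p' \<noteq> 0" using pp Suc.prems by auto
  have "degree ([:-s, 1:] * p') = degree [:-s, 1:] + degree p'" by (rule degree_mult_eq) (use p'z in simp_all)
  then have dp: "degree p = Suc (degree p')" using pp by simp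
  have r': "\<forall>s. poly p' s = 0 \<longrightarrow> v s < 0" using Suc.prems pp by auto
  have IH: "\<forall>k > 0. v (coeff p' 0) < v (coeff p' k)"
    using Suc.hyps(1)[of p'] Suc.hyps(2) dp p'z r' by simp
  have c0: "coeff p' 0 \<noteq> 0"
  proof
    assume "coeff p' 0 = 0"
    then show False using IH[rule_format, of 1] by simp
  qed
  obtain L where L: "v (coeff p' 0) = ereal L" using v_fin c0 by blast
  have cp: "coeff p k = - s * coeff p' k + (case k of 0 \<Rightarrow> 0 | Suc j \<Rightarrow> coeff p' j)" for k
    unfolding pp by (simp add: mult_pCons_left coeff_pCons split: nat.splits)
  have p0: "v (coeff p 0) = ereal (rs + L)" using cp[of 0] rs L by (simp add: v_mult)
  show ?case
  proof (intro allI impI)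
    fix k :: nat assume k: "0 < k"
    have a1: "ereal (rs + L) < v (- s * coeff p' k)"
    proof -
      have "ereal L < v (coeff p' k)" using IH k L by auto
      then show ?thesis unfolding v_mult v_uminus rs by (cases "v (coeff p' k)") auto
    qed
    have a2: "ereal (rs + L) < v (case k of 0 \<Rightarrow> 0 | Suc j \<Rightarrow> coeff p' j)"
    proof (cases k)
      case (Suc j)
      have "v (coeff p' 0) \<le> v (coeff p' j)" using IH by (cases j) (auto simp: less_imp_le)
      then show ?thesis using Suc L vs rs by (cases "v (coeff p' j)") auto
    qed (use k in simp)
    show "v (coeff p 0) < v (coeff p k)" unfolding p0 cp[of k] using a1 a2 by (rule v_gt_add)
  qed
qed

end



context valu2
begin

lemma coeff_sq_split: "coeff (e^2) m = (if even m then (coeff e (m div 2))^2 else 0) + err e m"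
  unfolding err_def by simp

lemma oddprod:
  assumes fz: "f \<noteq> 0" and Qz: "Q \<noteq> 0" and ex: "\<exists>k. odd k \<and> v (coeff f k) \<le> gv f"
  shows "\<exists>K. odd K \<and> v (coeff (f * Q^2) K) = gv f + 2 * gv Q"
proof -
  obtain rf where rf: "gv f = ereal rf" using gv_fin[OF fz] by blast
  obtain rq where rq: "gv Q = ereal rq" using gv_fin[OF Qz] by blast
  obtain r2 where r2: "v 2 = ereal r2" "0 < r2" using v2_fin v2pos by auto
  define S where "S = {k. odd k \<and> v (coeff f k) \<le> gv f}"
  define T where "T = {j. v (coeff Q j) \<le> gv Q}"
  have Ssub: "S \<subseteq> {..degree f}"
  proof
    fix k assume "k \<in> S"
    then have "coeff f k \<noteq> 0" unfolding S_def using rf by auto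
    then show "k \<in> {..degree f}" using le_degree by auto
  qed
  have Tsub: "T \<subseteq> {..degree Q}"
  proof
    fix k assume "k \<in> T"
    then have "coeff Q k \<noteq> 0" unfolding T_def using rq by auto
    then show "k \<in> {..degree Q}" using le_degree by auto
  qed
  have finS: "finite S" using Ssub finite_subset by blast
  have finT: "finite T" using Tsub finite_subset by blast
  have neS: "S \<noteq> {}" using ex unfolding S_def by blast
  have neT: "T \<noteq> {}" using gv_attained[of Q] unfolding T_def by (metis empty_iff mem_Collect_eq order_refl)
  define ks where "ks = Max S"
  define js where "js = Max T"
  have ksS: "ks \<in> S" unfolding ks_def using finS neS by (rule Max_in)
  have jsT: "js \<in> T" unfolding js_def using finT neT by (rule Max_in)
  have ks_odd: "odd ks" and vks: "v (coeff f ks) = gv f"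
    using ksS gv_le_coeff[of f ks] unfolding S_def by auto
  have vjs: "v (coeff Q js) = gv Q" using jsT gv_le_coeff[of Q js] unfolding T_def by auto
  have ks_max: "gv f < v (coeff f k)" if "odd k" "ks < k" for k
  proof -
    have "k \<notin> S" using that Max_ge[OF finS] ks_def by force
    then show ?thesis using that(1) unfolding S_def by auto
  qed
  have js_max: "gv Q < v (coeff Q j)" if "js < j" for j
  proof -
    have "j \<notin> T" using that Max_ge[OF finT] js_def by force
    then show ?thesis unfolding T_def by auto
  qed
  define K where "K = ks + 2 * js"
  define L where "L = gv f + 2 * gv Q"
  have Lr: "L = ereal (rf + 2 * rq)" unfolding L_def rf rq by simp
  have errb: "L < v (err Q m * coeff f i)" for m i
  proof -
    have "v 2 + 2 * gv Q + gv f \<le> v (err Q m) + v (coeff f i)"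
      using err_bound[of Q m] gv_le_coeff[of f i] by (rule add_mono)
    moreover have "L < v 2 + 2 * gv Q + gv f" unfolding L_def rf rq r2 using r2 by simp
    ultimately show ?thesis by (simp add: v_mult)
  qed
  have "v (coeff (Q^2 * f) K) = L"
    unfolding coeff_mult
  proof (rule v_sum_dom[where ii = "2 * js"])
    show "finite {..K}" by simp
    show "2 * js \<in> {..K}" unfolding K_def by simp
    show "L \<noteq> \<infinity>" using Lr by simp
    have "coeff (Q^2) (2 * js) * coeff f (K - 2 * js) = (coeff Q js)^2 * coeff f ks + err Q (2*js) * coeff f ks"
      unfolding coeff_sq_split K_def by (simp add: algebra_simps)
    moreover have "v ((coeff Q js)^2 * coeff f ks) = L" unfolding L_def v_mult v_power2 vjs vks by (simp add: add.commute)
    ultimately show "v (coeff (Q^2) (2 * js) * coeff f (K - 2 * js)) = L"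
      using errb[of "2*js" ks] v_add_strict by simp
    fix m assume m: "m \<in> {..K}" "m \<noteq> 2 * js"
    have eq: "coeff (Q^2) m * coeff f (K - m) = (if even m then (coeff Q (m div 2))^2 else 0) * coeff f (K - m) + err Q m * coeff f (K - m)"
      unfolding coeff_sq_split by (simp add: algebra_simps)
    have "L < v ((if even m then (coeff Q (m div 2))^2 else 0) * coeff f (K - m))"
    proof (cases "even m")
      case False then show ?thesis using Lr by simp
    next
      case True
      then obtain j where mj: "m = 2 * j" by blast
      then have jne: "j \<noteq> js" using m by simp
      show ?thesis
      proof (cases "js < j")
        case True
        have a: "2 * gv Q < v ((coeff Q j)^2)" using js_max[OF True] rq unfolding v_power2
          by (cases "v (coeff Q j)") auto
        have "L < v ((coeff Q j)^2) + v (coeff f (K - m))" unfolding L_def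
          using ereal_add_lt2[OF a gv_le_coeff[of f "K - m"]] rf rq by (simp add: add.commute)
        then show ?thesis using mj by (simp add: v_mult)
      next
        case False
        then have jl: "j < js" using jne by simp
        then have Km: "K - m = ks + 2 * (js - j)" unfolding K_def mj by simp
        have b: "gv f < v (coeff f (K - m))" unfolding Km using ks_odd jl by (intro ks_max) auto
        have a: "2 * gv Q \<le> v ((coeff Q j)^2)" unfolding v_power2 using gv_le_coeff[of Q j] rq
          by (cases "v (coeff Q j)") auto
        have "L < v ((coeff Q j)^2) + v (coeff f (K - m))" unfolding L_def
          using ereal_add_lt1[OF a b] rq by (simp add: add.commute)
        then show ?thesis using mj by (simp add: v_mult)
      qed
    qed
    then show "L < v (coeff (Q^2) m * coeff f (K - m))" unfolding eq using errb by (rule v_gt_add)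
  qed
  moreover have "odd K" unfolding K_def using ks_odd by simp
  ultimately show ?thesis unfolding L_def by (metis mult.commute)
qed

lemma ereal_sub_le: "c \<le> x - a \<Longrightarrow> a = ereal r \<Longrightarrow> a + c \<le> (x::ereal)"
  by (cases c; cases x) auto

lemma good_iff_not_os:
  assumes hz: "h \<noteq> 0" and hq: "h = q^2 + \<rho>" and rz: "\<rho> \<noteq> 0"
    and t0: "gv h \<le> gv \<rho>" and t2: "gv \<rho> < gv h + 2 * v 2"
  shows "good_dec v h q \<rho> \<longleftrightarrow> \<not> (\<forall>k. odd k \<longrightarrow> gv \<rho> < v (coeff \<rho> k))"
proof -
  obtain rh where rh: "gv h = ereal rh" using gv_fin[OF hz] by blast
  obtain rr where rr: "gv \<rho> = ereal rr" using gv_fin[OF rz] by blast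
  obtain r2 where r2: "v 2 = ereal r2" "0 < r2" using v2_fin v2pos by auto
  have dt: "dec_t v q \<rho> = gv \<rho> - gv h" unfolding dec_t_def using hq by simp
  have "dec_t v q \<rho> < 2 * v 2" unfolding dt using t2 rh rr r2 by simp
  then have "good_dec v h q \<rho> \<longleftrightarrow> \<not> (\<exists>q' \<rho>'. part_square_dec h q' \<rho>' \<and> dec_t v q \<rho> < dec_t v q' \<rho>')"
    unfolding good_dec_def using hq by auto
  then show ?thesis using good_crit[OF assms] by simp
qed

lemma part_a:
  fixes I :: "nat set" and hs qs \<rho>s :: "nat \<Rightarrow> 'a poly"
  assumes finI: "finite I" and iI: "ii \<in> I" and Jne: "I - {ii} \<noteq> {}"
    and ass: "\<forall>i\<in>I. hs i \<noteq> 0 \<and> hs i = qs i^2 + \<rho>s i \<and> gv (hs i) \<le> gv (\<rho>s i)"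
    and lt: "\<forall>j\<in>I - {ii}. gv (\<rho>s ii) - gv (hs ii) < gv (\<rho>s j) - gv (hs j)"
  shows "gv ((\<Prod>i\<in>I. hs i) - (\<Prod>i\<in>I. qs i)^2) - gv (\<Prod>i\<in>I. hs i) = gv (\<rho>s ii) - gv (hs ii) \<and>
         (good_dec v (\<Prod>i\<in>I. hs i) (\<Prod>i\<in>I. qs i) ((\<Prod>i\<in>I. hs i) - (\<Prod>i\<in>I. qs i)^2)
           \<longleftrightarrow> good_dec v (hs ii) (qs ii) (\<rho>s ii))"
proof -
  define J where "J = I - {ii}"
  define ts where "ts = (\<lambda>i. gv (\<rho>s i) - gv (hs i))"
  define H where "H = (\<Prod>j\<in>J. hs j)"
  define Q where "Q = (\<Prod>j\<in>J. qs j)"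
  define R where "R = H - Q^2"
  define h where "h = (\<Prod>i\<in>I. hs i)"
  define q where "q = (\<Prod>i\<in>I. qs i)"
  define \<rho> where "\<rho> = h - q^2"
  have finJ: "finite J" unfolding J_def using finI by simp
  have hsplit: "h = hs ii * H" unfolding h_def H_def J_def using finI iI by (simp add: prod.remove)
  have qsplit: "q = qs ii * Q" unfolding q_def Q_def J_def using finI iI by (simp add: prod.remove)
  have h0z: "hs ii \<noteq> 0" and h0: "hs ii = qs ii^2 + \<rho>s ii" and t0pos: "gv (hs ii) \<le> gv (\<rho>s ii)"
    using ass iI by auto
  obtain a where a: "gv (hs ii) = ereal a" using gv_fin[OF h0z] by blast
  obtain j0 where j0: "j0 \<in> J" using Jne J_def by blast
  have "ts ii < ts j0" using lt j0 unfolding ts_def J_def by blast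
  then have "ts ii \<noteq> \<infinity>" by auto
  moreover have "0 \<le> ts ii" unfolding ts_def using t0pos a by (cases "gv (\<rho>s ii)") auto
  ultimately obtain t0 where t0: "ts ii = ereal t0" "0 \<le> t0" by (cases "ts ii") auto
  have r0v: "gv (\<rho>s ii) = ereal (a + t0)" using t0 a unfolding ts_def by (cases "gv (\<rho>s ii)") auto
  have r0z: "\<rho>s ii \<noteq> 0" using r0v by auto
  define c' where "c' = Min (ts ` J)"
  have c'in: "c' \<in> ts ` J" unfolding c'_def using finJ Jne J_def by (intro Min_in) auto
  have c'le: "c' \<le> ts j" if "j \<in> J" for j unfolding c'_def using finJ that by simp
  have c'gt: "ereal t0 < c'" using c'in lt t0 unfolding ts_def J_def by auto
  have c'pos: "0 \<le> c'" using c'gt t0 by (metis ereal_less_eq(5) less_imp_le order_trans)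
  have assJ: "\<forall>j\<in>J. hs j \<noteq> 0 \<and> hs j = qs j^2 + \<rho>s j \<and> gv (hs j) + c' \<le> gv (\<rho>s j)"
  proof
    fix j assume j: "j \<in> J"
    then have jI: "j \<in> I" unfolding J_def by simp
    obtain r where r: "gv (hs j) = ereal r" using gv_fin ass jI by blast
    show "hs j \<noteq> 0 \<and> hs j = qs j^2 + \<rho>s j \<and> gv (hs j) + c' \<le> gv (\<rho>s j)"
      using ass jI c'le[OF j] r ereal_sub_le unfolding ts_def by blast
  qed
  have P: "gv H + c' \<le> gv R \<and> gv H \<le> gv (Q^2)"
    using part0[OF finJ assJ c'pos] unfolding H_def Q_def R_def .
  have gqj: "gv (qs j^2) = gv (hs j)" if "j \<in> J" for j
  proof -
    have jI: "j \<in> I" using that unfolding J_def by simp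
    obtain r where r: "gv (hs j) = ereal r" using gv_fin ass jI by blast
    have "ereal t0 < gv (\<rho>s j) - gv (hs j)" using lt that t0 unfolding ts_def J_def by auto
    then have "gv (hs j) < gv (- \<rho>s j)" using r t0 by (cases "gv (\<rho>s j)") auto
    then have "gv (hs j + - \<rho>s j) = gv (hs j)" by (rule gv_add_strict)
    then show ?thesis using ass jI by simp
  qed
  have gQH: "gv (Q^2) = gv H"
  proof -
    have "Q^2 = (\<Prod>j\<in>J. qs j^2)" unfolding Q_def by (simp add: prod_power_distrib)
    then have "gv (Q^2) = (\<Sum>j\<in>J. gv (qs j^2))" using finJ by (simp add: gv_prod)
    also have "\<dots> = (\<Sum>j\<in>J. gv (hs j))" using gqj by (intro sum.cong) auto
    also have "\<dots> = gv H" unfolding H_def using finJ by (simp add: gv_prod)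
    finally show ?thesis .
  qed
  have Hz: "H \<noteq> 0" unfolding H_def using finJ ass J_def by (auto simp: prod_zero_iff)
  obtain rH where rH: "gv H = ereal rH" using gv_fin[OF Hz] by blast
  have Qz: "Q \<noteq> 0" using gQH rH by auto
  have rid: "\<rho> = \<rho>s ii * Q^2 + hs ii * R"
    unfolding \<rho>_def R_def hsplit qsplit using h0 by (simp add: power_mult_distrib algebra_simps)
  define L where "L = ereal (a + t0 + rH)"
  have g1: "gv (\<rho>s ii * Q^2) = L" unfolding L_def gv_mult gQH r0v rH by simp
  have g2: "L < gv (hs ii * R)"
  proof -
    have "ereal a + (ereal rH + c') \<le> gv (hs ii * R)" unfolding gv_mult a[symmetric] rH[symmetric]
      using P by (intro add_left_mono) simp
    moreover have "L < ereal a + (ereal rH + c')" unfolding L_def using c'gt by (cases c') auto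
    ultimately show ?thesis by simp
  qed
  have gr: "gv \<rho> = L" unfolding rid using g1 g2 gv_add_strict by simp
  have gh: "gv h = ereal (a + rH)" unfolding hsplit gv_mult a rH by simp
  have tt: "gv \<rho> - gv h = gv (\<rho>s ii) - gv (hs ii)" unfolding gr gh L_def r0v a by simp
  have hz: "h \<noteq> 0" using gh by auto
  have rz: "\<rho> \<noteq> 0" using gr L_def by auto
  have hq: "h = q^2 + \<rho>" unfolding \<rho>_def by simp
  obtain r2 where r2: "v 2 = ereal r2" "0 < r2" using v2_fin v2pos by auto
  have good_eq: "good_dec v h q \<rho> \<longleftrightarrow> good_dec v (hs ii) (qs ii) (\<rho>s ii)"
  proof (cases "2 * v 2 \<le> ereal t0")
    case True
    have d1: "dec_t v q \<rho> = ereal t0" unfolding dec_t_def using hq tt t0 ts_def by simp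
    have d2: "dec_t v (qs ii) (\<rho>s ii) = ereal t0" unfolding dec_t_def using h0 t0 ts_def by simp
    show ?thesis unfolding good_dec_def d1 d2 using True hq h0 by simp
  next
    case False
    then have t2: "t0 < 2 * r2" using r2 by simp
    have G1: "good_dec v h q \<rho> \<longleftrightarrow> \<not> (\<forall>k. odd k \<longrightarrow> gv \<rho> < v (coeff \<rho> k))"
      by (rule good_iff_not_os[OF hz hq rz]) (use gr gh L_def t0 t2 r2 in simp_all)
    have G2: "good_dec v (hs ii) (qs ii) (\<rho>s ii) \<longleftrightarrow> \<not> (\<forall>k. odd k \<longrightarrow> gv (\<rho>s ii) < v (coeff (\<rho>s ii) k))"
      by (rule good_iff_not_os[OF h0z h0 r0z]) (use r0v a t0 t2 r2 in simp_all)
    have "(\<forall>k. odd k \<longrightarrow> gv \<rho> < v (coeff \<rho> k)) \<longleftrightarrow> (\<forall>k. odd k \<longrightarrow> gv (\<rho>s ii) < v (coeff (\<rho>s ii) k))"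
    proof
      assume os: "\<forall>k. odd k \<longrightarrow> gv \<rho> < v (coeff \<rho> k)"
      show "\<forall>k. odd k \<longrightarrow> gv (\<rho>s ii) < v (coeff (\<rho>s ii) k)"
      proof (rule ccontr)
        assume "\<not> (\<forall>k. odd k \<longrightarrow> gv (\<rho>s ii) < v (coeff (\<rho>s ii) k))"
        then have "\<exists>k. odd k \<and> v (coeff (\<rho>s ii) k) \<le> gv (\<rho>s ii)" by auto
        from oddprod[OF r0z Qz this] obtain K where K: "odd K" "v (coeff (\<rho>s ii * Q^2) K) = gv (\<rho>s ii) + 2 * gv Q" by blast
        have "gv (\<rho>s ii) + 2 * gv Q = L" using g1 by (simp add: gv_mult gv_power2)
        then have vK: "v (coeff (\<rho>s ii * Q^2) K) = L" using K by simp
        have "L < v (coeff (hs ii * R) K)" using g2 gv_le_coeff[of "hs ii * R" K] by simp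
        then have vv: "v (coeff \<rho> K) = L" unfolding rid coeff_add using vK v_add_strict by simp
        have "gv \<rho> < v (coeff \<rho> K)" using os K(1) by blast
        then show False using vv gr by simp
      qed
    next
      assume os: "\<forall>k. odd k \<longrightarrow> gv (\<rho>s ii) < v (coeff (\<rho>s ii) k)"
      obtain e where e1: "gv (\<rho>s ii) < gv (\<rho>s ii - e^2)" and e2: "gv (\<rho>s ii) \<le> 2 * gv e"
        using even_approx[OF r0z os] by blast
      define r where "r = (\<rho>s ii - e^2) * Q^2 + hs ii * R"
      have rr: "\<rho> = (e * Q)^2 + r" unfolding rid r_def by (simp add: power_mult_distrib algebra_simps)
      have "L < gv ((\<rho>s ii - e^2) * Q^2)" unfolding gv_mult gQH rH L_def using e1 r0v
        by (cases "gv (\<rho>s ii - e^2)") auto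
      then have gr2: "L < gv r" unfolding r_def using g2 by (rule gv_gt_add)
      have "L \<le> 2 * gv (e * Q)"
      proof -
        have "2 * gv (e * Q) = 2 * gv e + gv (Q^2)" unfolding gv_mult gv_power2
          by (cases "gv e"; cases "gv Q") (auto simp: algebra_simps)
        then show ?thesis using e2 r0v gQH rH L_def by (cases "gv e") auto
      qed
      then have "\<forall>k. odd k \<longrightarrow> L < v (coeff ((e * Q)^2 + r) k)"
        using sq_oddsmall[OF gr2] L_def by auto
      then show "\<forall>k. odd k \<longrightarrow> gv \<rho> < v (coeff \<rho> k)" using rr gr by simp
    qed
    then show ?thesis using G1 G2 by simp
  qed
  show ?thesis using tt good_eq unfolding h_def q_def \<rho>_def by simp
qed

lemma part_b_eq:
  assumes h1z: "h1 \<noteq> 0" and h2z: "h2 \<noteq> 0"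
    and hq1: "h1 = q1^2 + \<rho>1" and dq1: "degree q1 \<le> (degree h1 + 1) div 2" and hq2: "h2 = q2^2 + \<rho>2"
    and roots1: "\<forall>s. poly h1 s = 0 \<longrightarrow> 0 < v s" and roots2: "\<forall>s. poly h2 s = 0 \<longrightarrow> v s < 0"
    and good1: "good_dec v h1 q1 \<rho>1" and good2: "good_dec v h2 q2 \<rho>2"
    and teq: "gv \<rho>1 - gv h1 = gv \<rho>2 - gv h2" and tlt: "gv \<rho>1 - gv h1 < 2 * v 2"
    and tpos: "0 \<le> gv \<rho>1 - gv h1"
  shows "gv (h1 * h2 - (q1 * q2)^2) - gv (h1 * h2) = gv \<rho>1 - gv h1 \<and>
         good_dec v (h1 * h2) (q1 * q2) (h1 * h2 - (q1 * q2)^2)"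
proof -
  obtain a1 where a1: "gv h1 = ereal a1" using gv_fin[OF h1z] by blast
  obtain a2 where a2: "gv h2 = ereal a2" using gv_fin[OF h2z] by blast
  obtain r2 where r2: "v 2 = ereal r2" "0 < r2" using v2_fin v2pos by auto
  obtain t where tt: "gv \<rho>1 - gv h1 = ereal t" using tlt tpos r2 by (cases "gv \<rho>1 - gv h1") auto
  have t0: "0 \<le> t" and t2: "t < 2 * r2" using tpos tlt tt r2 by auto
  have gr1: "gv \<rho>1 = ereal (a1 + t)" using tt a1 by (cases "gv \<rho>1") auto
  have gr2: "gv \<rho>2 = ereal (a2 + t)" using tt teq a2 by (cases "gv \<rho>2") auto
  have r1z: "\<rho>1 \<noteq> 0" and r2z: "\<rho>2 \<noteq> 0" using gr1 gr2 by auto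
  define n1 where "n1 = degree h1"
  have lc1: "v (coeff h1 n1) = ereal a1" and c1: "\<forall>k. k \<noteq> n1 \<longrightarrow> ereal a1 < v (coeff h1 k)"
  proof -
    have rp: "\<forall>k < n1. v (coeff h1 n1) < v (coeff h1 k)" using root_pos[OF h1z roots1] n1_def by simp
    have "v (coeff h1 n1) \<le> gv h1"
    proof -
      have "v (coeff h1 n1) \<le> v (coeff h1 k)" for k
        using rp[rule_format, of k] by (cases "k < n1"; cases "k = n1") (auto simp: n1_def coeff_eq_0)
      then show ?thesis by (simp add: gv_ge_iff)
    qed
    then show lc: "v (coeff h1 n1) = ereal a1" using gv_le_coeff[of h1 n1] a1 by simp
    show "\<forall>k. k \<noteq> n1 \<longrightarrow> ereal a1 < v (coeff h1 k)"
    proof (intro allI impI)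
      fix k assume "k \<noteq> n1"
      then show "ereal a1 < v (coeff h1 k)" using rp lc by (cases "k < n1") (auto simp: n1_def coeff_eq_0)
    qed
  qed
  have lc2: "v (coeff h2 0) = ereal a2" and c2: "\<forall>k. 0 < k \<longrightarrow> ereal a2 < v (coeff h2 k)"
  proof -
    have rn: "\<forall>k > 0. v (coeff h2 0) < v (coeff h2 k)" using root_neg[OF h2z roots2] by simp
    have "v (coeff h2 0) \<le> gv h2"
    proof -
      have "v (coeff h2 0) \<le> v (coeff h2 k)" for k using rn by (cases k) (auto simp: less_imp_le)
      then show ?thesis by (simp add: gv_ge_iff)
    qed
    then show lc: "v (coeff h2 0) = ereal a2" using gv_le_coeff[of h2 0] a2 by simp
    show "\<forall>k. 0 < k \<longrightarrow> ereal a2 < v (coeff h2 k)" using rn lc by simp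
  qed
  have G1: "good_dec v h1 q1 \<rho>1 \<longleftrightarrow> \<not> (\<forall>k. odd k \<longrightarrow> gv \<rho>1 < v (coeff \<rho>1 k))"
    by (rule good_iff_not_os[OF h1z hq1 r1z]) (use gr1 a1 t0 t2 r2 in simp_all)
  have G2: "good_dec v h2 q2 \<rho>2 \<longleftrightarrow> \<not> (\<forall>k. odd k \<longrightarrow> gv \<rho>2 < v (coeff \<rho>2 k))"
    by (rule good_iff_not_os[OF h2z hq2 r2z]) (use gr2 a2 t0 t2 r2 in simp_all)
  have gq1: "ereal a1 \<le> 2 * gv q1"
  proof -
    have "gv h1 \<le> gv (h1 - \<rho>1)" using gr1 a1 t0 by (intro gv_ge_diff) auto
    then show ?thesis using hq1 a1 by (simp add: gv_power2)
  qed
  have gq2: "ereal a2 \<le> 2 * gv q2"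
  proof -
    have "gv h2 \<le> gv (h2 - \<rho>2)" using gr2 a2 t0 by (intro gv_ge_diff) auto
    then show ?thesis using hq2 a2 by (simp add: gv_power2)
  qed
  have tpos': "0 < t"
  proof (rule ccontr)
    assume "\<not> 0 < t"
    then have tz: "t = 0" using t0 by simp
    have "\<forall>k. odd k \<longrightarrow> gv \<rho>2 < v (coeff \<rho>2 k)"
    proof (intro allI impI)
      fix k :: nat assume ok: "odd k"
      have "coeff \<rho>2 k = coeff h2 k - err q2 k" using hq2 ok unfolding err_def by simp
      moreover have "ereal a2 < v (coeff h2 k)" using c2 ok by (cases k) auto
      moreover have "ereal a2 < v (err q2 k)"
      proof -
        have "ereal a2 < v 2 + 2 * gv q2" using lt_plus_v2[OF gq2] by simp
        then show ?thesis using err_bound[of q2 k] by simp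
      qed
      ultimately show "gv \<rho>2 < v (coeff \<rho>2 k)" using gr2 tz by (simp add: v_gt_diff)
    qed
    then show False using G2 good2 by simp
  qed
  have n1e: "even n1"
  proof (rule ccontr)
    assume on: "odd n1"
    have "coeff h1 n1 = err q1 n1 + coeff \<rho>1 n1" using hq1 on unfolding err_def by simp
    moreover have "ereal a1 < v (err q1 n1)"
    proof -
      have "ereal a1 < v 2 + 2 * gv q1" using lt_plus_v2[OF gq1] by simp
      then show ?thesis using err_bound[of q1 n1] by simp
    qed
    moreover have "ereal a1 < v (coeff \<rho>1 n1)"
    proof -
      have "ereal a1 < ereal (a1 + t)" using tpos' by simp
      also have "\<dots> \<le> v (coeff \<rho>1 n1)" using gr1 gv_le_coeff[of \<rho>1 n1] by simp
      finally show ?thesis .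
    qed
    ultimately have "ereal a1 < v (coeff h1 n1)" by (simp add: v_gt_add)
    then show False using lc1 by simp
  qed
  have dsq: "degree (q1^2) \<le> n1"
  proof -
    have "degree (q1^2) \<le> 2 * degree q1" using degree_power_le[of q1 2] by simp
    also have "\<dots> \<le> n1" using dq1 n1e unfolding n1_def[symmetric] by (auto elim!: evenE)
    finally show ?thesis .
  qed
  have cr1: "coeff \<rho>1 k = 0" if "n1 < k" for k
  proof -
    have "\<rho>1 = h1 - q1^2" using hq1 by simp
    then show ?thesis using that dsq n1_def by (simp add: coeff_eq_0)
  qed
  obtain k where ko: "odd k" and vk: "v (coeff \<rho>1 k) \<le> gv \<rho>1" using G1 good1 by auto
  have vk': "v (coeff \<rho>1 k) = ereal (a1 + t)" using vk gv_le_coeff[of \<rho>1 k] gr1 by simp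
  have kn: "k < n1"
  proof -
    have "coeff \<rho>1 k \<noteq> 0" using vk' by auto
    then have "k \<le> n1" using cr1 by (meson not_le)
    moreover have "k \<noteq> n1" using ko n1e by auto
    ultimately show ?thesis by simp
  qed
  have rb1: "ereal a1 < v (coeff \<rho>1 i)" for i
  proof -
    have "ereal a1 < ereal (a1 + t)" using tpos' by simp
    also have "\<dots> \<le> v (coeff \<rho>1 i)" using gr1 gv_le_coeff[of \<rho>1 i] by simp
    finally show ?thesis .
  qed
  have rb2: "ereal a2 < v (coeff \<rho>2 i)" for i
  proof -
    have "ereal a2 < ereal (a2 + t)" using tpos' by simp
    also have "\<dots> \<le> v (coeff \<rho>2 i)" using gr2 gv_le_coeff[of \<rho>2 i] by simp
    finally show ?thesis .
  qed
  have q2c0: "v (coeff (q2^2) 0) = ereal a2"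
  proof -
    have "coeff (q2^2) 0 = coeff h2 0 + - coeff \<rho>2 0" using hq2 by simp
    moreover have "v (coeff h2 0) < v (- coeff \<rho>2 0)" using lc2 rb2[of 0] by simp
    ultimately show ?thesis using v_add_strict[of "coeff h2 0" "- coeff \<rho>2 0"] lc2 by simp
  qed
  have q2cj: "ereal a2 < v (coeff (q2^2) j)" if "0 < j" for j
  proof -
    have "coeff (q2^2) j = coeff h2 j - coeff \<rho>2 j" using hq2 by simp
    moreover have "ereal a2 < v (coeff \<rho>2 j)" by (rule rb2)
    ultimately show ?thesis using c2 that by (simp add: v_gt_diff)
  qed
  have q1ci: "ereal a1 < v (coeff (q1^2) i)" if "i \<noteq> n1" for i
  proof -
    have "coeff (q1^2) i = coeff h1 i - coeff \<rho>1 i" using hq1 by simp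
    moreover have "ereal a1 < v (coeff \<rho>1 i)" by (rule rb1)
    ultimately show ?thesis using c1 that by (simp add: v_gt_diff)
  qed
  define L where "L = ereal (a1 + t + a2)"
  define \<rho> where "\<rho> = h1 * h2 - (q1 * q2)^2"
  have rid: "\<rho> = \<rho>1 * q2^2 + (q1^2 * \<rho>2 + \<rho>1 * \<rho>2)"
    unfolding \<rho>_def hq1 hq2 by (simp add: power_mult_distrib algebra_simps)
  have A: "v (coeff (\<rho>1 * q2^2) k) = L"
    unfolding coeff_mult
  proof (rule v_sum_dom[where ii = k])
    show "v (coeff \<rho>1 k * coeff (q2^2) (k - k)) = L" unfolding L_def using vk' q2c0 by (simp add: v_mult)
    fix i assume i: "i \<in> {..k}" "i \<noteq> k"
    have ki: "0 < k - i" using i by auto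
    have "ereal (a1 + t) \<le> v (coeff \<rho>1 i)" using gv_le_coeff[of \<rho>1 i] gr1 by simp
    then have "ereal (a1 + t) + ereal a2 < v (coeff \<rho>1 i) + v (coeff (q2^2) (k - i))"
      by (rule ereal_add_lt1[OF _ q2cj[OF ki]]) simp_all
    then show "L < v (coeff \<rho>1 i * coeff (q2^2) (k - i))" unfolding L_def by (simp add: v_mult)
  qed (auto simp: L_def)
  have B: "L < v (coeff (q1^2 * \<rho>2) k)"
    unfolding coeff_mult
  proof (rule v_sum_gt)
    fix i assume i: "i \<in> {..k}"
    then have "i \<noteq> n1" using kn by auto
    then have "ereal a1 + ereal (a2 + t) < v (coeff (q1^2) i) + v (coeff \<rho>2 (k - i))"
      using ereal_add_lt2[OF q1ci gv_le_coeff[of \<rho>2 "k - i"]] gr2 by auto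
    then show "L < v (coeff (q1^2) i * coeff \<rho>2 (k - i))" unfolding L_def by (simp add: v_mult algebra_simps)
  qed (auto simp: L_def)
  have C: "L < v (coeff (\<rho>1 * \<rho>2) k)"
  proof -
    have "gv (\<rho>1 * \<rho>2) = ereal (a1 + t + (a2 + t))" unfolding gv_mult gr1 gr2 by simp
    then have "ereal (a1 + t + (a2 + t)) \<le> v (coeff (\<rho>1 * \<rho>2) k)" using gv_le_coeff[of "\<rho>1 * \<rho>2" k] by simp
    moreover have "ereal (a1 + t + a2) < ereal (a1 + t + (a2 + t))" using tpos' by simp
    ultimately show ?thesis unfolding L_def using order_less_le_trans by blast
  qed
  have vrk: "v (coeff \<rho> k) = L" unfolding rid coeff_add using A B C v_add_strict v_gt_add by simp
  have "L \<le> gv \<rho>"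
  proof -
    have "L \<le> gv (\<rho>1 * q2^2)" unfolding gv_mult gr1 gv_power2 L_def using gq2
      by (cases "gv q2") auto
    moreover have "L \<le> gv (q1^2 * \<rho>2)" unfolding gv_mult gr2 gv_power2 L_def using gq1
      by (cases "gv q1") auto
    moreover have "L \<le> gv (\<rho>1 * \<rho>2)" unfolding gv_mult gr1 gr2 L_def using t0 by simp
    ultimately show ?thesis unfolding rid by (intro gv_ge_add)
  qed
  then have gr: "gv \<rho> = L" using gv_le_coeff[of \<rho> k] vrk by simp
  have gh: "gv (h1 * h2) = ereal (a1 + a2)" unfolding gv_mult a1 a2 by simp
  have hz: "h1 * h2 \<noteq> 0" using h1z h2z by simp
  have rz: "\<rho> \<noteq> 0" using gr L_def by auto
  have hq: "h1 * h2 = (q1 * q2)^2 + \<rho>" unfolding \<rho>_def by simp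
  have "good_dec v (h1 * h2) (q1 * q2) \<rho> \<longleftrightarrow> \<not> (\<forall>k. odd k \<longrightarrow> gv \<rho> < v (coeff \<rho> k))"
    by (rule good_iff_not_os[OF hz hq rz]) (use gr gh L_def t0 t2 r2 in simp_all)
  moreover have "\<not> (\<forall>k. odd k \<longrightarrow> gv \<rho> < v (coeff \<rho> k))" using ko vrk gr by auto
  ultimately have "good_dec v (h1 * h2) (q1 * q2) \<rho>" by simp
  moreover have "gv \<rho> - gv (h1 * h2) = gv \<rho>1 - gv h1" unfolding gr gh L_def tt by simp
  ultimately show ?thesis unfolding \<rho>_def by simp
qed

end



theorem proposition3p16:
  fixes v :: "'a::field_char_0 \<Rightarrow> ereal"
    and K :: "'a set"
    and N :: nat
    and hs qs \<rho>s :: "nat \<Rightarrow> 'a poly"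
    and h q \<rho> :: "'a poly"
    and t :: ereal
    and ts :: "nat \<Rightarrow> ereal"
  assumes closed: "alg_closed_field TYPE('a)"
    and val: "is_valuation v"
    and subK: "is_subfield K"
    and disc: "discrete_on v K"
    and compl: "complete_on v K"
    and alg: "algebraic_over K"
    and res2: "0 < v 2"
    and resclosed: "residue_alg_closed v K"
    and N_pos: "1 \<le> N"
    and h_def: "h = (\<Prod>i=1..N. hs i)"
    and hs_nz: "\<forall>i\<in>{1..N}. hs i \<noteq> 0"
    and decs: "\<forall>i\<in>{1..N}. part_square_dec (hs i) (qs i) (\<rho>s i)"
    and q_def: "q = (\<Prod>i=1..N. qs i)"
    and \<rho>_def: "\<rho> = h - q ^ 2"
    and ts_def: "\<forall>i\<in>{1..N}. ts i = dec_t v (qs i) (\<rho>s i)"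
    and t_def: "t = dec_t v q \<rho>"
    and ts_nonneg: "\<forall>i\<in>{1..N}. 0 \<le> ts i"
  shows "Min (ts ` {1..N}) \<le> t
    \<and> (\<forall>i0\<in>{1..N}. (\<forall>j\<in>{1..N}. j \<noteq> i0 \<longrightarrow> ts i0 < ts j) \<longrightarrow>
          t = ts i0 \<and> (good_dec v h q \<rho> \<longleftrightarrow> good_dec v (hs i0) (qs i0) (\<rho>s i0)))
    \<and> ((N = 2
         \<and> (\<forall>s. poly (hs 1) s = 0 \<longrightarrow> 0 < v s)
         \<and> (\<forall>s. poly (hs 2) s = 0 \<longrightarrow> v s < 0)
         \<and> good_dec v (hs 1) (qs 1) (\<rho>s 1)
         \<and> good_dec v (hs 2) (qs 2) (\<rho>s 2)
         \<and> min (ts 1) (ts 2) < 2 * v 2)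
       \<longrightarrow> t = min (ts 1) (ts 2) \<and> good_dec v h q \<rho>)"
proof -
  interpret valu2 v using val closed res2 by (simp add: valu2_def valu_def valu2_axioms_def)
  define I where "I = {1..N}"
  have finI: "finite I" unfolding I_def by simp
  have neI: "I \<noteq> {}" unfolding I_def using N_pos by simp
  have hq: "\<forall>i\<in>I. hs i = qs i^2 + \<rho>s i" using decs unfolding I_def part_square_dec_def by blast
  have hz: "\<forall>i\<in>I. hs i \<noteq> 0" using hs_nz unfolding I_def by blast
  have tsd: "\<forall>i\<in>I. ts i = gauss_val v (\<rho>s i) - gauss_val v (hs i)"
    using ts_def hq unfolding I_def dec_t_def by auto
  have gle: "\<forall>i\<in>I. gauss_val v (hs i) \<le> gauss_val v (\<rho>s i)"
  proof
    fix i assume i: "i \<in> I"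
    obtain r where r: "gauss_val v (hs i) = ereal r" using gv_fin hz i by blast
    have "0 \<le> ts i" using ts_nonneg i unfolding I_def by blast
    then show "gauss_val v (hs i) \<le> gauss_val v (\<rho>s i)" using ereal_sub_le[of 0 "gauss_val v (\<rho>s i)"] tsd i r by force
  qed
  have hI: "h = (\<Prod>i\<in>I. hs i)" and qI: "q = (\<Prod>i\<in>I. qs i)" using h_def q_def I_def by simp_all
  have hnz: "h \<noteq> 0" unfolding hI using finI hz by (auto simp: prod_zero_iff)
  obtain rh where rh: "gauss_val v h = ereal rh" using gv_fin[OF hnz] by blast
  have tt: "t = gauss_val v \<rho> - gauss_val v h" unfolding t_def dec_t_def \<rho>_def by simp
  have PA: "\<forall>i0\<in>I. (\<forall>j\<in>I. j \<noteq> i0 \<longrightarrow> ts i0 < ts j) \<longrightarrow>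
          t = ts i0 \<and> (good_dec v h q \<rho> \<longleftrightarrow> good_dec v (hs i0) (qs i0) (\<rho>s i0))"
  proof (intro ballI impI)
    fix i0 assume i0: "i0 \<in> I" and un: "\<forall>j\<in>I. j \<noteq> i0 \<longrightarrow> ts i0 < ts j"
    show "t = ts i0 \<and> (good_dec v h q \<rho> \<longleftrightarrow> good_dec v (hs i0) (qs i0) (\<rho>s i0))"
    proof (cases "I - {i0} = {}")
      case True
      then have "I = {i0}" using i0 by blast
      then have e: "h = hs i0" "q = qs i0" using hI qI by simp_all
      then have "\<rho> = \<rho>s i0" using \<rho>_def hq i0 by simp
      then show ?thesis using e ts_def t_def i0 unfolding I_def by simp
    next
      case False
      have ass: "\<forall>i\<in>I. hs i \<noteq> 0 \<and> hs i = qs i^2 + \<rho>s i \<and> gauss_val v (hs i) \<le> gauss_val v (\<rho>s i)"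
        using hz hq gle by blast
      have lt: "\<forall>j\<in>I - {i0}. gauss_val v (\<rho>s i0) - gauss_val v (hs i0) < gauss_val v (\<rho>s j) - gauss_val v (hs j)"
        using un tsd i0 by auto
      from part_a[OF finI i0 False ass lt] show ?thesis
        unfolding hI[symmetric] qI[symmetric] \<rho>_def[symmetric] tt[symmetric] using tsd i0 by simp
    qed
  qed
  define c where "c = Min (ts ` I)"
  have cin: "c \<in> ts ` I" unfolding c_def using finI neI by simp
  have cle: "\<And>i. i \<in> I \<Longrightarrow> c \<le> ts i" unfolding c_def using finI by simp
  have c0: "0 \<le> c" using cin ts_nonneg unfolding I_def by auto
  have assc: "\<forall>j\<in>I. hs j \<noteq> 0 \<and> hs j = qs j^2 + \<rho>s j \<and> gauss_val v (hs j) + c \<le> gauss_val v (\<rho>s j)"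
  proof
    fix j assume j: "j \<in> I"
    obtain r where r: "gauss_val v (hs j) = ereal r" using gv_fin hz j by blast
    show "hs j \<noteq> 0 \<and> hs j = qs j^2 + \<rho>s j \<and> gauss_val v (hs j) + c \<le> gauss_val v (\<rho>s j)"
      using hz hq j cle[OF j] tsd r ereal_sub_le by metis
  qed
  have "gauss_val v h + c \<le> gauss_val v \<rho>"
    using part0[OF finI assc c0] unfolding hI[symmetric] qI[symmetric] \<rho>_def by blast
  then have P0: "Min (ts ` {1..N}) \<le> t" unfolding tt c_def[unfolded I_def, symmetric] rh
    by (cases c; cases "gauss_val v \<rho>") auto
  have PB: "(N = 2
         \<and> (\<forall>s. poly (hs 1) s = 0 \<longrightarrow> 0 < v s)
         \<and> (\<forall>s. poly (hs 2) s = 0 \<longrightarrow> v s < 0)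
         \<and> good_dec v (hs 1) (qs 1) (\<rho>s 1)
         \<and> good_dec v (hs 2) (qs 2) (\<rho>s 2)
         \<and> min (ts 1) (ts 2) < 2 * v 2)
       \<longrightarrow> t = min (ts 1) (ts 2) \<and> good_dec v h q \<rho>"
  proof (intro impI, elim conjE)
    assume N2: "N = 2" and r1: "\<forall>s. poly (hs 1) s = 0 \<longrightarrow> 0 < v s" and r2: "\<forall>s. poly (hs 2) s = 0 \<longrightarrow> v s < 0"
      and g1: "good_dec v (hs 1) (qs 1) (\<rho>s 1)" and g2: "good_dec v (hs 2) (qs 2) (\<rho>s 2)"
      and mlt: "min (ts 1) (ts 2) < 2 * v 2"
    have I2: "I = {1, 2}" unfolding I_def N2 by auto
    show "t = min (ts 1) (ts 2) \<and> good_dec v h q \<rho>"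
    proof (cases "ts 1 = ts 2")
      case False
      show ?thesis
      proof (cases "ts 1 < ts 2")
        case True
        have "\<forall>j\<in>I. j \<noteq> 1 \<longrightarrow> ts 1 < ts j" using True I2 by auto
        then show ?thesis using PA I2 g1 True by auto
      next
        case F2: False
        then have lt: "ts 2 < ts 1" using False by auto
        have "\<forall>j\<in>I. j \<noteq> 2 \<longrightarrow> ts 2 < ts j" using lt I2 by auto
        then show ?thesis using PA I2 g2 lt by auto
      qed
    next
      case True
      have hh: "h = hs 1 * hs 2" and qq: "q = qs 1 * qs 2" using hI qI I2 by simp_all
      have d1: "part_square_dec (hs 1) (qs 1) (\<rho>s 1)" using decs N2 by simp
      have t1: "ts 1 = gauss_val v (\<rho>s 1) - gauss_val v (hs 1)" using tsd I2 by simp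
      have t2: "ts 2 = gauss_val v (\<rho>s 2) - gauss_val v (hs 2)" using tsd I2 by simp
      have "gauss_val v (h - q^2) - gauss_val v h = gauss_val v (\<rho>s 1) - gauss_val v (hs 1) \<and> good_dec v h q (h - q^2)"
        unfolding hh qq
      proof (rule part_b_eq)
        show "hs 1 \<noteq> 0" "hs 2 \<noteq> 0" using hz I2 by auto
        show "hs 1 = (qs 1)^2 + \<rho>s 1" "hs 2 = (qs 2)^2 + \<rho>s 2" using hq I2 by auto
        show "degree (qs 1) \<le> (degree (hs 1) + 1) div 2" using d1 unfolding part_square_dec_def by blast
        show "\<forall>s. poly (hs 1) s = 0 \<longrightarrow> 0 < v s" "\<forall>s. poly (hs 2) s = 0 \<longrightarrow> v s < 0" by fact+
        show "good_dec v (hs 1) (qs 1) (\<rho>s 1)" "good_dec v (hs 2) (qs 2) (\<rho>s 2)" by fact+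
        show "gauss_val v (\<rho>s 1) - gauss_val v (hs 1) = gauss_val v (\<rho>s 2) - gauss_val v (hs 2)"
          using True t1 t2 by simp
        show "gauss_val v (\<rho>s 1) - gauss_val v (hs 1) < 2 * v 2" using mlt True t1 by simp
        show "0 \<le> gauss_val v (\<rho>s 1) - gauss_val v (hs 1)" using ts_nonneg t1 N2 by (metis atLeastAtMost_iff le_refl one_le_numeral)
      qed
      then show ?thesis using tt True t1 \<rho>_def by simp
    qed
  qed
  show ?thesis using P0 PA PB unfolding I_def by blast
qed


end
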